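(* Let $M\subseteq[r]^d$ be a dot array satisfying (P1) and (P3), and suppose $M$ contains a sparse permutation array $P$ of rank $r$ and dimension $d$. Then $M=\overline P$.
   Context: Let $[r]=\{0,\dots,r\}$. $[r]^d$ is partially ordered coordinatewise, with meet $\mathbf x\wedge\mathbf y=(\min(x_i,y_i))_i$. A dot array is a subset of $[r]^d$. Let $\mathrm{rk}_iP$ be one less than the number of distinct values of the $i$-th coordinate among elements of $P$. $P$ is rankable of rank $s$ if all $\mathrm{rk}_iP=s$. $P$ is totally rankable if every principal subarray $P[\mathbf x]=\{\mathbf y\in P:\mathbf y\succeq\mathbf x\}$ is rankable. A point $\mathbf x\in[r]^d$ is redundant for $P$ if $\mathbf x=\bigwedge\mathcal H$ for some $\mathcal H\subseteq P$ with $|\mathcal H|\ge2$ such that every member of $\mathcal H$ shares at least one coordinate with $\mathbf x$. $R(P)$ is the set of redundant points. A permutation array of rank $r$ and dimension $d$ is a totally rankable $P\subseteq[r]^d$ of rank $r$ containing no redundant point. Its redundant closure is $\overline P=P\cup R(P)$. A permutation array is sparse if for every coordinate $i$ and every $c\in[r]$ exactly one element of $P$ has $i$-th coordinate $c$. Properties of a dot array $M$: (P1) $M$ is closed under the meet $\wedge$. (P3) every set $S$ of $r+2$ elements of $M$ contains a subset $S'$ (with at least two elements) such that for every $1\le i\le d$ the value $\min\{x_i:\mathbf x\in S'\}$ is attained by at least two elements of $S'$. *)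

theory Defs
  imports Main
begin

text \<open>Points of [r]^d are represented as functions nat => nat whose coordinates
  0..d-1 lie in {0..r} and which vanish outside {0..<d} (coordinates are
  indexed 0..d-1 instead of 1..d).\<close>

type_synonym point = "nat \<Rightarrow> nat"

definition grid :: "nat \<Rightarrow> nat \<Rightarrow> point set" where
  "grid r d = {x. (\<forall>i<d. x i \<le> r) \<and> (\<forall>i\<ge>d. x i = 0)}"

definition meet :: "point \<Rightarrow> point \<Rightarrow> point" where
  "meet x y = (\<lambda>i. min (x i) (y i))"

definition Meet :: "point set \<Rightarrow> point" where
  "Meet H = (\<lambda>i. Min ((\<lambda>h. h i) ` H))"

definition pleq :: "point \<Rightarrow> point \<Rightarrow> bool" where
  "pleq x y \<longleftrightarrow> (\<forall>i. x i \<le> y i)"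

text \<open>rk_i P = (number of distinct i-th coordinates) - 1, as an integer
  (so the empty array has rank -1 in every coordinate).\<close>
definition rk :: "nat \<Rightarrow> point set \<Rightarrow> int" where
  "rk i P = int (card ((\<lambda>x. x i) ` P)) - 1"

definition rankable_of_rank :: "nat \<Rightarrow> point set \<Rightarrow> int \<Rightarrow> bool" where
  "rankable_of_rank d P s \<longleftrightarrow> (\<forall>i<d. rk i P = s)"

definition rankable :: "nat \<Rightarrow> point set \<Rightarrow> bool" where
  "rankable d P \<longleftrightarrow> (\<exists>s. rankable_of_rank d P s)"

definition principal :: "point set \<Rightarrow> point \<Rightarrow> point set" where
  "principal P x = {y \<in> P. pleq x y}"

definition totally_rankable :: "nat \<Rightarrow> nat \<Rightarrow> point set \<Rightarrow> bool" where
  "totally_rankable r d P \<longleftrightarrow> (\<forall>x\<in>grid r d. rankable d (principal P x))"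

definition redundant :: "nat \<Rightarrow> nat \<Rightarrow> point set \<Rightarrow> point \<Rightarrow> bool" where
  "redundant r d P x \<longleftrightarrow> x \<in> grid r d \<and>
     (\<exists>H. H \<subseteq> P \<and> finite H \<and> card H \<ge> 2 \<and>
          (\<forall>h\<in>H. \<exists>i<d. h i = x i) \<and> x = Meet H)"

definition redundant_set :: "nat \<Rightarrow> nat \<Rightarrow> point set \<Rightarrow> point set" where
  "redundant_set r d P = {x. redundant r d P x}"

definition permutation_array :: "nat \<Rightarrow> nat \<Rightarrow> point set \<Rightarrow> bool" where
  "permutation_array r d P \<longleftrightarrow> P \<subseteq> grid r d \<and> totally_rankable r d P \<and>
     rankable_of_rank d P (int r) \<and> P \<inter> redundant_set r d P = {}"

definition redundant_closure :: "nat \<Rightarrow> nat \<Rightarrow> point set \<Rightarrow> point set" where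
  "redundant_closure r d P = P \<union> redundant_set r d P"

definition sparse :: "nat \<Rightarrow> nat \<Rightarrow> point set \<Rightarrow> bool" where
  "sparse r d P \<longleftrightarrow> (\<forall>i<d. \<forall>c\<le>r. \<exists>!p. p \<in> P \<and> p i = c)"

definition P1 :: "point set \<Rightarrow> bool" where
  "P1 M \<longleftrightarrow> (\<forall>x\<in>M. \<forall>y\<in>M. meet x y \<in> M)"

definition P3 :: "nat \<Rightarrow> nat \<Rightarrow> point set \<Rightarrow> bool" where
  "P3 r d M \<longleftrightarrow> (\<forall>S. S \<subseteq> M \<and> finite S \<and> card S = r + 2 \<longrightarrow>
     (\<exists>S'. S' \<subseteq> S \<and> card S' \<ge> 2 \<and>
        (\<forall>i<d. card {x \<in> S'. x i = Min ((\<lambda>y. y i) ` S')} \<ge> 2)))"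

end

theory Submission
  imports Defs
begin

lemma Meet_in:
  assumes "P1 M" "finite H" "H \<noteq> {}" "H \<subseteq> M"
  shows "Meet H \<in> M"
  using assms(2,3,4)
proof (induction H rule: finite_ne_induct)
  case (singleton x)
  have "Meet {x} = x" by (simp add: Meet_def)
  then show ?case using singleton by simp
next
  case (insert x F)
  have "Meet (insert x F) = meet x (Meet F)"
    using insert.hyps by (auto simp: Meet_def meet_def image_insert intro!: ext)
  moreover have "Meet F \<in> M" using insert by auto
  ultimately show ?case using assms(1) insert.prems unfolding P1_def by auto
qed

theorem mainTheorem2:
  fixes r d :: nat and M P :: "point set"
  assumes "d \<ge> 1"
    and "M \<subseteq> grid r d"
    and "P1 M"
    and "P3 r d M"
    and "P \<subseteq> M"
    and "permutation_array r d P"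
    and "sparse r d P"
  shows "M = redundant_closure r d P"
proof
  have Pg: "P \<subseteq> grid r d" using assms(2,5) by auto
  have sp: "\<And>i c. i < d \<Longrightarrow> c \<le> r \<Longrightarrow> \<exists>!p. p \<in> P \<and> p i = c"
    using assms(7) unfolding sparse_def by auto
  have uniq: "\<And>i a b. i < d \<Longrightarrow> a \<in> P \<Longrightarrow> b \<in> P \<Longrightarrow> a i = b i \<Longrightarrow> a = b"
  proof -
    fix i a b assume h: "i < d" "a \<in> P" "b \<in> P" "a i = b i"
    have "a i \<le> r" using h Pg unfolding grid_def by auto
    then show "a = b" using sp[OF h(1), of "a i"] h by metis
  qed
  have d0: "0 < d" using assms(1) by simp
  have bij: "bij_betw (\<lambda>p. p 0) P {0..r}"
    unfolding bij_betw_def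
  proof
    show "inj_on (\<lambda>p. p 0) P" using uniq[OF d0] by (auto simp: inj_on_def)
    show "(\<lambda>p. p 0) ` P = {0..r}"
    proof
      show "(\<lambda>p. p 0) ` P \<subseteq> {0..r}" using Pg d0 unfolding grid_def by auto
      show "{0..r} \<subseteq> (\<lambda>p. p 0) ` P"
      proof
        fix c assume "c \<in> {0..r}"
        then obtain p where "p \<in> P" "p 0 = c" using sp[OF d0, of c] by auto
        then show "c \<in> (\<lambda>p. p 0) ` P" by force
      qed
    qed
  qed
  have finP: "finite P" using bij bij_betw_finite by blast
  have cardP: "card P = r + 1" using bij_betw_same_card[OF bij] by simp
  show "M \<subseteq> redundant_closure r d P"
  proof
    fix m assume mM: "m \<in> M"
    show "m \<in> redundant_closure r d P"
    proof (cases "m \<in> P")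
      case True then show ?thesis by (simp add: redundant_closure_def)
    next
      case False
      have mg: "m \<in> grid r d" using mM assms(2) by auto
      define S where "S = insert m P"
      have "S \<subseteq> M" "finite S" "card S = r + 2"
        using mM assms(5) finP cardP False by (auto simp: S_def)
      then obtain S' where S': "S' \<subseteq> S" "card S' \<ge> 2"
        "\<forall>i<d. card {x \<in> S'. x i = Min ((\<lambda>y. y i) ` S')} \<ge> 2"
        using assms(4)[unfolded P3_def, rule_format, of S] by blast
      have finS': "finite S'" using S'(1) \<open>finite S\<close> finite_subset by blast
      have key: "m \<in> S' \<and> m i = Min ((\<lambda>y. y i) ` S') \<and> (\<exists>p\<in>S'. p \<in> P \<and> p i = m i)"
        if i: "i < d" for i
      proof -
        let ?A = "{x \<in> S'. x i = Min ((\<lambda>y. y i) ` S')}"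
        have "card ?A \<ge> 2" using S'(3) i by auto
        moreover have "finite ?A" using finS' by simp
        ultimately have "\<not> (\<forall>a\<in>?A. \<forall>b\<in>?A. a = b)"
          using card_le_Suc0_iff_eq[of ?A] by linarith
        then obtain a b where ab: "a \<in> ?A" "b \<in> ?A" "a \<noteq> b" by blast
        have "\<not> (a \<in> P \<and> b \<in> P)" using uniq[OF i] ab by auto
        then consider "a = m" "b \<in> P" | "b = m" "a \<in> P"
          using ab S'(1) unfolding S_def by blast
        then show ?thesis
        proof cases
          case 1 then show ?thesis using ab by auto
        next
          case 2 then show ?thesis using ab by auto
        qed
      qed
      have mS': "m \<in> S'" using key[OF d0] by simp
      have mle: "m i \<le> q i" if "i < d" "q \<in> S'" for i q
      proof -
        have "Min ((\<lambda>y. y i) ` S') \<le> q i" by (rule Min_le) (use finS' that in auto)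
        then show ?thesis using key[OF that(1)] by simp
      qed
      define H where "H = {h \<in> S' - {m}. \<exists>i<d. h i = m i}"
      have HP: "H \<subseteq> P" using S'(1) by (auto simp: H_def S_def)
      have finH: "finite H" using finS' by (auto simp: H_def)
      have att: "\<exists>p\<in>H. p i = m i" if "i < d" for i
        using key[OF that] that False by (auto simp: H_def)
      have Hne: "H \<noteq> {}" using att[OF d0] by auto
      have Hg: "H \<subseteq> grid r d" using HP Pg by auto
      have meetH: "Meet H = m"
      proof
        fix i
        show "Meet H i = m i"
        proof (cases "i < d")
          case True
          then obtain p where "p \<in> H" "p i = m i" using att by blast
          moreover have "\<And>y. y \<in> (\<lambda>h. h i) ` H \<Longrightarrow> m i \<le> y"
            using mle True by (auto simp: H_def)
          ultimately show ?thesis unfolding Meet_def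
            by (intro Min_eqI) (use finH in \<open>auto, metis image_eqI\<close>)
        next
          case False
          have z: "h i = 0" if "h \<in> H" for h using Hg that False unfolding grid_def by auto
          obtain h0 where "h0 \<in> H" using Hne by blast
          then have "(\<lambda>h. h i) ` H = {0}" using z by (auto intro!: image_eqI[of 0 _ h0])
          moreover have "m i = 0" using mg False unfolding grid_def by auto
          ultimately show ?thesis by (simp add: Meet_def)
        qed
      qed
      have cH: "card H \<ge> 2"
      proof (rule ccontr)
        assume "\<not> card H \<ge> 2"
        moreover have "card H > 0" using Hne finH by (simp add: card_gt_0_iff)
        ultimately have "card H = 1" by linarith
        then obtain p where Hp: "H = {p}" using card_1_singletonE by blast
        have "p = m"
        proof
          fix i show "p i = m i"
          proof (cases "i < d")
            case True then show ?thesis using att[OF True] Hp by auto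
          next
            case False then show ?thesis using Hg Hp mg unfolding grid_def by auto
          qed
        qed
        then show False using Hp by (auto simp: H_def)
      qed
      have "redundant r d P m"
        unfolding redundant_def
        using mg HP finH cH meetH by (intro conjI exI[of _ H]) (auto simp: H_def)
      then show ?thesis by (simp add: redundant_closure_def redundant_set_def)
    qed
  qed
  show "redundant_closure r d P \<subseteq> M"
  proof
    fix x assume "x \<in> redundant_closure r d P"
    then consider "x \<in> P" | "redundant r d P x"
      by (auto simp: redundant_closure_def redundant_set_def)
    then show "x \<in> M"
    proof cases
      case 1 then show ?thesis using assms(5) by auto
    next
      case 2
      then obtain H where H: "H \<subseteq> P" "finite H" "card H \<ge> 2" "x = Meet H"
        unfolding redundant_def by blast
      have "H \<noteq> {}" using H(3) by auto
      then show ?thesis using Meet_in[OF assms(3) H(2)] H(1,4) assms(5) by auto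
    qed
  qed
qed

end
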